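(* Let $B$ be the closed unit ball of $\mathfrak{M}^{2\times2}(\mathbb{R})\cong\mathbb{R}^4$, i.e. the set of matrices $\begin{pmatrix}a&c\\ b&d\end{pmatrix}$ with $a^2+b^2+c^2+d^2\le1$. Then $\sup_{A\in B}|\det A|=\tfrac12$, and there exists $p>1$ such that, with $P=\begin{pmatrix}0&0\\0&p\end{pmatrix}$, $$\sup_{A\in\mathrm{co}(\{P\}\cup B)}|\det A|=\sup_{A\in B}|\det A|=\tfrac12 .$$ Consequently the compact convex set $\mathrm{co}(\{P\}\cup B)$ has strictly larger volume than $B$ but the same value of $\sup|\det|$, so Euclidean balls do not maximise $|E|^{1/2}/\sup_{A\in E}|\det A|$ among compact convex sets $E\subset\mathfrak{M}^{2\times2}(\mathbb{R})$.
   Context: $\mathrm{co}(S)$ denotes the convex hull of $S$. Volume is Lebesgue measure on $\mathbb{R}^4$. *)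

theory Defs
  imports "HOL-Analysis.Analysis"
begin

text \<open>2x2 real matrices as real^2^2; entry A$i$j is row i, column j.
  The matrix (a c; b d) has a = A$1$1, c = A$1$2, b = A$2$1, d = A$2$2.\<close>

definition unit_ball_M2 :: "(real^2^2) set" where
  "unit_ball_M2 = {A. (A$1$1)^2 + (A$2$1)^2 + (A$1$2)^2 + (A$2$2)^2 \<le> 1}"

definition Pmat :: "real \<Rightarrow> real^2^2" where
  "Pmat p = (\<chi> i j. if i = 2 \<and> j = 2 then p else 0)"

end

theory Submission
  imports Defs
begin

lemma lin:
  fixes x x' y y' p r :: real
  assumes "x \<le> x'" "y \<le> y'" "0 \<le> p" "0 \<le> r" "1 - 2*(x'+y') = p + r"
  shows "x+y \<le> 1/2"
  using assms by (simp add: algebra_simps)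

lemma key:
  fixes s a b c d :: real
  assumes s0: "0 \<le> s" and s1: "s \<le> 1" and n: "a^2+b^2+c^2+d^2 \<le> 1"
  shows "s^2*(a*d-b*c) + s*(1-s)*(11/10)*a \<le> 1/2"
proof -
  define e where "e = a - d"
  define t where "t = a + d"
  define q where "q = 1 - s"
  have q0: "0 \<le> q" using s1 q_def by simp
  have h0: "0 \<le> (b+c)^2" by simp
  have h1: "b*c \<ge> -(b^2+c^2)/2" using h0 by (simp add: power2_eq_square algebra_simps)
  have h2: "a*d-b*c \<le> (1-e^2)/2"
    using h1 n unfolding e_def by (simp add: power2_eq_square algebra_simps)
  have t2: "t^2 \<le> 2" using n unfolding t_def
    by (smt (verit) power2_diff power2_sum sum_squares_ge_zero zero_le_power2)
  have tT: "t \<le> 14143/10000"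
  proof (rule ccontr)
    assume "\<not> ?thesis"
    then have "t > 14143/10000" by simp
    then have "t*t > (14143/10000)*(14143/10000)"
      by (intro mult_strict_mono) auto
    then show False using t2 by (simp add: power2_eq_square)
  qed
  have ha: "a = (e+t)/2" unfolding e_def t_def by simp
  have l1: "s^2*(a*d-b*c) \<le> s^2*((1-e^2)/2)"
    using h2 by (intro mult_left_mono) auto
  have sq0: "0 \<le> s*q*(11/10)" using s0 q0 by simp
  have l2: "s*q*(11/10)*a \<le> s*q*(11/10)*((e + 14143/10000)/2)"
    using tT ha by (intro mult_left_mono[OF _ sq0]) simp
  have sq: "0 \<le> (s*e - q*(11/10)/2)^2" by simp
  have br: "0 \<le> q*((1+s) - s*(11/10)*(14143/10000) - q*(11/10)^2/4)"
  proof (rule mult_nonneg_nonneg[OF q0])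
    show "0 \<le> (1+s) - s*(11/10)*(14143/10000) - q*(11/10)^2/4"
      unfolding q_def power2_eq_square using s0 s1 by (simp add: field_simps)
  qed
  have id: "1 - 2*(s^2*((1-e^2)/2) + s*q*(11/10)*((e + 14143/10000)/2))
     = (s*e - q*(11/10)/2)^2 + q*((1+s) - s*(11/10)*(14143/10000) - q*(11/10)^2/4)"
    unfolding q_def power2_eq_square by (simp add: field_simps)
  have "s^2*(a*d-b*c) + s*q*(11/10)*a \<le> 1/2" by (rule lin[OF l1 l2 sq br id])
  then show ?thesis unfolding q_def .
qed

lemma ball_eq: "unit_ball_M2 = cball 0 1"
proof -
  have "norm (A::real^2^2) ^2 = (A$1$1)^2 + (A$2$1)^2 + (A$1$2)^2 + (A$2$2)^2" for A
    by (simp add: norm_vec_def L2_set_def sum_2)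
  then have "norm (A::real^2^2) \<le> 1 \<longleftrightarrow> (A$1$1)^2 + (A$2$1)^2 + (A$1$2)^2 + (A$2$2)^2 \<le> 1" for A
    by (metis abs_norm_cancel norm_ge_zero one_le_power abs_le_square_iff abs_one power_one)
  then show ?thesis unfolding unit_ball_M2_def cball_def by (auto simp: dist_norm)
qed


lemma norm2: "norm (A::real^2^2) ^2 = (A$1$1)^2 + (A$2$1)^2 + (A$1$2)^2 + (A$2$2)^2"
  by (simp add: norm_vec_def L2_set_def sum_2)

lemma norm_Pmat: "norm (Pmat p) = \<bar>p\<bar>"
proof -
  have "norm (Pmat p) ^2 = p^2" by (simp add: norm2 Pmat_def)
  then show ?thesis by (metis abs_norm_cancel power2_eq_iff_nonneg abs_ge_zero norm_ge_zero real_sqrt_abs real_sqrt_unique)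
qed

lemma Pmat_diff: "Pmat a - Pmat b = Pmat (a - b)"
  by (simp add: Pmat_def vec_eq_iff)

lemma det_bound: "A \<in> unit_ball_M2 \<Longrightarrow> \<bar>det A\<bar> \<le> 1/2"
proof -
  assume "A \<in> unit_ball_M2"
  then have n: "(A$1$1)^2 + (A$2$1)^2 + (A$1$2)^2 + (A$2$2)^2 \<le> 1" by (simp add: unit_ball_M2_def)
  have 1: "A$1$1*A$2$2 - A$2$1*A$1$2 \<le> 1/2" using key[of 1 "A$1$1" "A$2$1" "A$1$2" "A$2$2"] n by simp
  have 2: "(-A$1$1)*A$2$2 - A$2$1*(-A$1$2) \<le> 1/2" using key[of 1 "-A$1$1" "A$2$1" "-A$1$2" "A$2$2"] n by simp
  have dA: "det A = A$1$1*A$2$2 - A$2$1*A$1$2" by (simp add: det_2 mult.commute)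
  show ?thesis using 1 2 unfolding dA abs_le_iff by (simp add: algebra_simps)
qed

abbreviation HH :: "(real^2^2) set" where "HH \<equiv> convex hull (insert (Pmat (11/10)) unit_ball_M2)"

lemma hull_bound: "x \<in> HH \<Longrightarrow> \<bar>det x\<bar> \<le> 1/2"
proof -
  assume "x \<in> HH"
  have ne: "unit_ball_M2 \<noteq> {}" by (auto simp: ball_eq)
  have cv: "convex hull unit_ball_M2 = unit_ball_M2" by (simp add: ball_eq convex_hull_eq)
  obtain uu vv A where uv: "uu \<ge> 0" "vv \<ge> 0" "uu + vv = 1" "A \<in> unit_ball_M2"
     and x: "x = uu *\<^sub>R Pmat (11/10) + vv *\<^sub>R A"
    using \<open>x \<in> HH\<close> unfolding convex_hull_insert[OF ne] cv by blast
  have n: "(A$1$1)^2 + (A$2$1)^2 + (A$1$2)^2 + (A$2$2)^2 \<le> 1" using uv by (simp add: unit_ball_M2_def)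
  have uu_eq: "uu = 1 - vv" using uv by simp
  have dx: "det x = vv^2*(A$1$1*A$2$2 - A$2$1*A$1$2) + vv*(1-vv)*(11/10)*A$1$1"
    unfolding det_2 x uu_eq by (simp add: Pmat_def power2_eq_square field_simps)
  have 1: "vv^2*(A$1$1*A$2$2 - A$2$1*A$1$2) + vv*(1-vv)*(11/10)*A$1$1 \<le> 1/2"
    using key[of vv "A$1$1" "A$2$1" "A$1$2" "A$2$2"] n uv by simp
  have 2: "vv^2*((-A$1$1)*A$2$2 - A$2$1*(-A$1$2)) + vv*(1-vv)*(11/10)*(-A$1$1) \<le> 1/2"
    using key[of vv "-A$1$1" "A$2$1" "-A$1$2" "A$2$2"] n uv by simp
  have 3: "- (vv^2*(A$1$1*A$2$2 - A$2$1*A$1$2) + vv*(1-vv)*(11/10)*A$1$1) \<le> 1/2"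
  proof -
    have "vv^2*((-A$1$1)*A$2$2 - A$2$1*(-A$1$2)) + vv*(1-vv)*(11/10)*(-A$1$1)
       = - (vv^2*(A$1$1*A$2$2 - A$2$1*A$1$2) + vv*(1-vv)*(11/10)*A$1$1)"
      by (simp add: field_simps)
    then show ?thesis using 2 by simp
  qed
  show ?thesis using 1 3 unfolding dx abs_le_iff by linarith
qed

definition "A0 = (\<chi> i j. if i = j then sqrt (1/2) else (0::real) :: real^2^2)"

lemma A0: "A0 \<in> unit_ball_M2" "\<bar>det A0\<bar> = 1/2"
  by (simp_all add: A0_def unit_ball_M2_def det_2)

lemma sup1: "(SUP A\<in>unit_ball_M2. \<bar>det A\<bar>) = 1/2"
  by (rule cSup_eq_maximum) (use A0 det_bound in force)+

lemma sup2: "(SUP A\<in>HH. \<bar>det A\<bar>) = 1/2"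
  by (rule cSup_eq_maximum) (use A0 hull_bound hull_subset in force)+


lemma HH_compact: "compact HH"
  by (simp add: ball_eq compact_convex_hull)

lemma HH_convex: "convex HH"
  by simp

lemma Pmat_scale: "c *\<^sub>R Pmat a = Pmat (c*a)"
  by (simp add: Pmat_def vec_eq_iff)

lemma ball_sub: "ball (Pmat (41/40)) (1/50) \<subseteq> HH"
proof
  fix y assume y: "y \<in> ball (Pmat (41/40)) (1/50)"
  define w where "w = 2 *\<^sub>R y - Pmat (11/10)"
  have "w = 2 *\<^sub>R (y - Pmat (11/20))" unfolding w_def by (simp add: scaleR_diff_right Pmat_scale)
  then have nw: "norm w = 2 * norm (y - Pmat (11/20))" by simp
  have eq: "y - Pmat (11/20) = (y - Pmat (41/40)) + (Pmat (41/40) - Pmat (11/20))" by simp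
  have tri: "norm (y - Pmat (11/20)) \<le> norm (y - Pmat (41/40)) + norm (Pmat (41/40) - Pmat (11/20))"
    by (subst eq) (rule norm_triangle_ineq)
  have "norm w \<le> 2 * (norm (y - Pmat (41/40)) + norm (Pmat (41/40) - Pmat (11/20)))"
    using nw tri by simp
  moreover have "norm (y - Pmat (41/40)) < 1/50" using y by (simp add: dist_norm norm_minus_commute)
  moreover have "norm (Pmat (41/40) - Pmat (11/20)) = 19/40" by (simp add: Pmat_diff norm_Pmat)
  ultimately have "norm w \<le> 1" by simp
  then have wB: "w \<in> unit_ball_M2" by (simp add: ball_eq)
  have yeq: "y = (1/2) *\<^sub>R w + (1 - 1/2) *\<^sub>R Pmat (11/10)" unfolding w_def
    by (simp add: scaleR_diff_right)
  show "y \<in> HH" unfolding yeq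
    by (rule convexD) (use wB in \<open>auto intro: hull_inc\<close>)
qed

lemma ball_disj: "ball (Pmat (41/40)) (1/50) \<inter> unit_ball_M2 = {}"
proof (rule ccontr)
  assume "\<not> ?thesis"
  then obtain y where y: "y \<in> ball (Pmat (41/40)) (1/50)" "norm y \<le> 1" by (auto simp: ball_eq)
  have "norm (Pmat (41/40)) \<le> norm y + norm (Pmat (41/40) - y)"
  proof -
    have "Pmat (41/40) = y + (Pmat (41/40) - y)" by simp
    then show ?thesis by (metis norm_triangle_ineq)
  qed
  moreover have "norm (Pmat (41/40) - y) < 1/50" using y by (simp add: dist_norm)
  ultimately show False using y by (simp add: norm_Pmat)
qed

lemma meas: "emeasure lebesgue HH > emeasure lebesgue unit_ball_M2"
proof -
  let ?Bl = "ball (Pmat (41/40)) (1/50)"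
  have fin: "emeasure lebesgue unit_ball_M2 < \<infinity>"
    using emeasure_lborel_cball_finite[of "0::real^2^2" 1] by (simp add: ball_eq)
  have pos: "0 < emeasure lebesgue ?Bl"
    by (simp add: emeasure_ball)
  have sB: "unit_ball_M2 \<in> sets lebesgue" unfolding ball_eq by (rule fmeasurableD[OF lmeasurable_cball])
  have sBl: "?Bl \<in> sets lebesgue" by (rule fmeasurableD[OF lmeasurable_ball])
  have sH: "HH \<in> sets lebesgue" by (rule fmeasurableD[OF lmeasurable_compact[OF HH_compact]])
  have dj: "unit_ball_M2 \<inter> ?Bl = {}" using ball_disj by blast
  have sub0: "unit_ball_M2 \<subseteq> HH" by (rule subset_trans[OF subset_insertI hull_subset])
  have sub: "unit_ball_M2 \<union> ?Bl \<subseteq> HH" using sub0 ball_sub by (rule Un_least)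
  have "emeasure lebesgue unit_ball_M2 < emeasure lebesgue unit_ball_M2 + emeasure lebesgue ?Bl"
    using fin pos by (metis add.right_neutral ennreal_add_left_cancel_less)
  also have "\<dots> = emeasure lebesgue (unit_ball_M2 \<union> ?Bl)"
    by (rule plus_emeasure[OF sB sBl dj])
  also have "\<dots> \<le> emeasure lebesgue HH"
    by (rule emeasure_mono[OF sub sH])
  finally show ?thesis .
qed

theorem mainTheorem5:
  shows "(SUP A\<in>unit_ball_M2. \<bar>det A\<bar>) = 1/2 \<and>
    (\<exists>p::real. p > 1 \<and>
       (SUP A\<in>convex hull (insert (Pmat p) unit_ball_M2). \<bar>det A\<bar>) = (SUP A\<in>unit_ball_M2. \<bar>det A\<bar>) \<and>
       (SUP A\<in>convex hull (insert (Pmat p) unit_ball_M2). \<bar>det A\<bar>) = 1/2 \<and>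
       compact (convex hull (insert (Pmat p) unit_ball_M2)) \<and>
       convex (convex hull (insert (Pmat p) unit_ball_M2)) \<and>
       emeasure lebesgue (convex hull (insert (Pmat p) unit_ball_M2)) > emeasure lebesgue unit_ball_M2)"
proof (rule conjI[OF sup1], rule exI[of _ "11/10"], intro conjI)
  show "(11/10::real) > 1" by simp
  show "(SUP A\<in>HH. \<bar>det A\<bar>) = (SUP A\<in>unit_ball_M2. \<bar>det A\<bar>)"
    unfolding sup1 sup2 ..
  show "(SUP A\<in>HH. \<bar>det A\<bar>) = 1/2" by (rule sup2)
  show "compact HH" by (rule HH_compact)
  show "convex HH" by (rule HH_convex)
  show "emeasure lebesgue HH > emeasure lebesgue unit_ball_M2" by (rule meas)
qed

end
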